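(* For a word $w=w_1\cdots w_n$ over $\{1,2,3\}$ let $s(w)=|\{i : 1\le i\le n-2,\ w_{i+2}-w_i=2\}|$ (the number of occurrences of the place-difference-value pattern $(12,(\mathbb{P},\{2\},\mathbb{P}),\{(1,2,\{2\})\},(\mathbb{P},\mathbb{P}))$). Then $$\sum_{w\in\{1,2,3\}^*} q^{|w|}z^{s(w)}=\frac{1}{\bigl(1-q^2(1-z)\bigr)\bigl(1-3q-q^2(z-1)\bigr)},$$ where the sum is over all finite words (including the empty word) and $|w|$ is the length of $w$. *)

theory Defs
  imports "HOL-Computational_Algebra.Formal_Power_Series"
begin

text \<open>Words over the alphabet {1,2,3}, as lists of naturals; the letter w_i (1-indexed)
  is w ! (i - 1).\<close>
definition words :: "nat \<Rightarrow> nat list set" where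
  "words n = {w. length w = n \<and> set w \<subseteq> {1,2,3}}"

definition s_stat :: "nat list \<Rightarrow> nat" where
  "s_stat w = card {i. 1 \<le> i \<and> i + 2 \<le> length w \<and>
                      int (w ! (i + 1)) - int (w ! (i - 1)) = 2}"

end

theory Submission
  imports Defs
begin

lemma finite_words: "finite (words n)"
proof -
  have "words n = {xs. set xs \<subseteq> {1,2,3::nat} \<and> length xs = n}" by (auto simp: words_def)
  thus ?thesis using finite_lists_length_eq[of "{1,2,3::nat}" n] by simp
qed

lemma words_Suc: "words (Suc n) = (\<lambda>(c,w). c # w) ` ({1,2,3} \<times> words n)"
  by (auto simp: words_def length_Suc_conv)

lemma sum_words_Suc:
  "(\<Sum>w\<in>words (Suc n). g w) = (\<Sum>w\<in>words n. g (1#w) + g (2#w) + g (3#w))"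
proof -
  have inj: "inj_on (\<lambda>(c,w). c # w) ({1,2,3::nat} \<times> words n)"
    by (auto simp: inj_on_def)
  have "(\<Sum>w\<in>words (Suc n). g w) = (\<Sum>p\<in>{1,2,3::nat} \<times> words n. g (fst p # snd p))"
    unfolding words_Suc by (subst sum.reindex[OF inj]) (simp add: case_prod_beta)
  also have "\<dots> = (\<Sum>c\<in>{1,2,3::nat}. \<Sum>w\<in>words n. g (c # w))"
    by (simp add: sum.cartesian_product case_prod_beta)
  also have "\<dots> = (\<Sum>w\<in>words n. g (1#w) + g (2#w) + g (3#w))"
    by (simp add: sum.distrib add.assoc)
  finally show ?thesis .
qed

lemma words_0: "words 0 = {[]}" by (auto simp: words_def)

lemma s_stat_Nil: "s_stat [] = 0" by (simp add: s_stat_def)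

lemma s_stat_Cons:
  "s_stat (c # w) = s_stat w + (if 2 \<le> length w \<and> int (w!1) - int c = 2 then 1 else 0)"
proof -
  define S where "S = {i. 1 \<le> i \<and> i + 2 \<le> length w \<and> int (w ! (i + 1)) - int (w ! (i - 1)) = 2}"
  have fin: "finite S" unfolding S_def by (rule finite_subset[of _ "{..length w}"]) auto
  have eq: "{i. 1 \<le> i \<and> i + 2 \<le> length (c#w) \<and> int ((c#w) ! (i + 1)) - int ((c#w) ! (i - 1)) = 2}
      = Suc ` S \<union> (if 2 \<le> length w \<and> int (w!1) - int c = 2 then {1} else {})"
  proof (intro set_eqI iffI)
    fix i assume i: "i \<in> {i. 1 \<le> i \<and> i + 2 \<le> length (c#w) \<and> int ((c#w) ! (i + 1)) - int ((c#w) ! (i - 1)) = 2}"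
    show "i \<in> Suc ` S \<union> (if 2 \<le> length w \<and> int (w!1) - int c = 2 then {1} else {})"
    proof (cases "i = 1")
      case True thus ?thesis using i by auto
    next
      case False
      then obtain j where j: "i = Suc j" "j \<ge> 1" using i by (cases i) auto
      then obtain k where k: "j = Suc k" by (cases j) auto
      have "j \<in> S" using i j k by (auto simp: S_def)
      thus ?thesis using j by auto
    qed
  next
    fix i assume i: "i \<in> Suc ` S \<union> (if 2 \<le> length w \<and> int (w!1) - int c = 2 then {1} else {})"
    show "i \<in> {i. 1 \<le> i \<and> i + 2 \<le> length (c#w) \<and> int ((c#w) ! (i + 1)) - int ((c#w) ! (i - 1)) = 2}"
    proof (cases "i = 1")
      case True thus ?thesis using i by (auto simp: S_def split: if_splits)
    next
      case False
      then obtain j where j: "i = Suc j" "j \<in> S" using i by (auto split: if_splits)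
      then obtain k where k: "j = Suc k" by (cases j) (auto simp: S_def)
      show ?thesis using j k by (auto simp: S_def)
    qed
  qed
  have "1 \<notin> Suc ` S" by (auto simp: S_def)
  moreover have "card (Suc ` S) = card S" by (simp add: card_image)
  moreover have "s_stat w = card S" by (simp add: s_stat_def S_def)
  ultimately show ?thesis
    unfolding s_stat_def[of "c#w"] eq using fin by auto
qed

lemma nth1_words: "w \<in> words n \<Longrightarrow> 2 \<le> length w \<Longrightarrow> w!1 = 1 \<or> w!1 = 2 \<or> w!1 = 3"
proof -
  assume a: "w \<in> words n" "2 \<le> length w"
  have "w!1 \<in> set w" using a(2) by (intro nth_mem) simp
  thus ?thesis using a(1) unfolding words_def by auto
qed

lemma nth0_words: "w \<in> words n \<Longrightarrow> 1 \<le> length w \<Longrightarrow> w!0 = 1 \<or> w!0 = 2 \<or> w!0 = 3"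
proof -
  assume a: "w \<in> words n" "1 \<le> length w"
  have "w!0 \<in> set w" using a(2) by (intro nth_mem) linarith
  thus ?thesis using a(1) unfolding words_def by auto
qed

context fixes z :: "'a :: field" begin

definition "aa n = (\<Sum>w\<in>words n. z ^ s_stat w)"
definition "PP n = (\<Sum>w\<in>words n. if 1 \<le> length w \<and> w!0 = 3 then z ^ s_stat w else 0)"
definition "QQ n = (\<Sum>w\<in>words n. if 2 \<le> length w \<and> w!1 = 3 then z ^ s_stat w else 0)"
definition "RR n = (\<Sum>w\<in>words n. if 2 \<le> length w \<and> w!0 = 3 \<and> w!1 = 3 then z ^ s_stat w else 0)"

lemma aa_Suc: "aa (Suc n) = 3 * aa n + (z - 1) * QQ n"
proof -
  have "aa (Suc n) = (\<Sum>w\<in>words n. 3 * z ^ s_stat w + (z - 1) * (if 2 \<le> length w \<and> w!1 = 3 then z ^ s_stat w else 0))"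
    unfolding aa_def sum_words_Suc
  proof (rule sum.cong[OF refl])
    fix w assume w: "w \<in> words n"
    show "z ^ s_stat (1 # w) + z ^ s_stat (2 # w) + z ^ s_stat (3 # w) =
      3 * z ^ s_stat w + (z - 1) * (if 2 \<le> length w \<and> w!1 = 3 then z ^ s_stat w else 0)"
    proof (cases "2 \<le> length w")
      case True
      then show ?thesis using nth1_words[OF w True]
        by (auto simp: s_stat_Cons algebra_simps)
    qed (simp add: s_stat_Cons algebra_simps)
  qed
  thus ?thesis by (simp add: aa_def QQ_def sum.distrib sum_distrib_left)
qed

lemma PP_Suc: "PP (Suc n) = aa n"
  unfolding PP_def aa_def sum_words_Suc by (rule sum.cong) (auto simp: s_stat_Cons dest: nth1_words)

lemma RR_Suc: "RR (Suc n) = PP n"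
  unfolding PP_def RR_def sum_words_Suc by (rule sum.cong) (auto simp: s_stat_Cons dest: nth1_words)

lemma QQ_Suc: "QQ (Suc n) = 3 * PP n + (z - 1) * RR n"
proof -
  have "QQ (Suc n) = (\<Sum>w\<in>words n. 3 * (if 1 \<le> length w \<and> w!0 = 3 then z ^ s_stat w else 0) + (z - 1) * (if 2 \<le> length w \<and> w!0 = 3 \<and> w!1 = 3 then z ^ s_stat w else 0))"
    unfolding QQ_def sum_words_Suc
  proof (rule sum.cong[OF refl])
    fix w assume w: "w \<in> words n"
    show "(if 2 \<le> length (1 # w) \<and> (1 # w) ! 1 = 3 then z ^ s_stat (1 # w) else 0) +
         (if 2 \<le> length (2 # w) \<and> (2 # w) ! 1 = 3 then z ^ s_stat (2 # w) else 0) +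
         (if 2 \<le> length (3 # w) \<and> (3 # w) ! 1 = 3 then z ^ s_stat (3 # w) else 0) =
      3 * (if 1 \<le> length w \<and> w!0 = 3 then z ^ s_stat w else 0) + (z - 1) * (if 2 \<le> length w \<and> w!0 = 3 \<and> w!1 = 3 then z ^ s_stat w else 0)"
    proof (cases "2 \<le> length w")
      case True
      then show ?thesis using nth1_words[OF w True]
        by (auto simp: s_stat_Cons algebra_simps)
    qed (auto simp: s_stat_Cons algebra_simps)
  qed
  thus ?thesis by (simp add: PP_def RR_def sum.distrib sum_distrib_left)
qed

end


lemma base0: "aa z 0 = 1" "PP z 0 = 0" "QQ z 0 = 0" "RR z 0 = 0"
  by (simp_all add: aa_def PP_def QQ_def RR_def words_0 s_stat_Nil)

theorem mainTheorem3:
  fixes z :: "'a :: field"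
  shows "Abs_fps (\<lambda>n. \<Sum>w\<in>words n. z ^ s_stat w) =
         inverse ((1 - fps_X ^ 2 * fps_const (1 - z)) *
                  (1 - 3 * fps_X - fps_X ^ 2 * fps_const (z - 1)))"
proof -
  define A where "A = Abs_fps (aa z)"
  define P where "P = Abs_fps (PP z)"
  define Q where "Q = Abs_fps (QQ z)"
  define R where "R = Abs_fps (RR z)"
  define c where "c = fps_const (z - 1)"
  have three: "\<And>f::'a fps. fps_nth (3 * f) n = 3 * fps_nth f n" for n
    by (metis fps_numeral_fps_const fps_mult_left_const_nth)
  have hA: "A = 1 + fps_X * (3 * A + c * Q)"
    by (rule fps_ext, rename_tac n, case_tac n) (auto simp: A_def Q_def c_def base0 aa_Suc three
         split: nat.splits)
  have hP: "P = fps_X * A"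
    by (rule fps_ext, rename_tac n, case_tac n) (auto simp: A_def P_def base0 PP_Suc split: nat.splits)
  have hR: "R = fps_X * P"
    by (rule fps_ext, rename_tac n, case_tac n) (auto simp: R_def P_def base0 RR_Suc split: nat.splits)
  have hQ: "Q = fps_X * (3 * P + c * R)"
    by (rule fps_ext, rename_tac n, case_tac n) (auto simp: Q_def P_def R_def c_def base0 QQ_Suc three
         split: nat.splits)
  have c1: "fps_const (1 - z) = - c" by (simp add: c_def fps_const_neg[symmetric])
  have "((1 - fps_X ^ 2 * fps_const (1 - z)) *
                  (1 - 3 * fps_X - fps_X ^ 2 * fps_const (z - 1))) * A = 1"
    unfolding c1 c_def[symmetric] using hA hP hR hQ by algebra
  hence "inverse ((1 - fps_X ^ 2 * fps_const (1 - z)) *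
                  (1 - 3 * fps_X - fps_X ^ 2 * fps_const (z - 1))) = A"
    by (rule fps_inverse_unique)
  moreover have "aa z = (\<lambda>n. \<Sum>w\<in>words n. z ^ s_stat w)" by (rule ext) (simp add: aa_def)
  ultimately show ?thesis by (simp add: A_def)
qed

end
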